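(* For every formula $\varphi$, if $\vdash_{\mathbf{PTKv}^{-}}\varphi$ then $\varphi$ is valid (true at every world of every model).
   Context: Fix a countable set $\mathsf{Prop}$ of propositional variables, a countable set $\mathsf{Term}$ of atomic terms, and a finite set of agents $\mathcal{A}=\{1,\dots,n\}$. Let $\Theta_K=[0,1]\cap\mathbb{Q}$ and $\Theta_V^+=(\frac12,1]\cap\mathbb{Q}$. Formulas are generated by $\varphi::= p\mid t=s\mid\neg\varphi\mid(\varphi\to\psi)\mid K_i^\theta\varphi\mid Kv_i^\eta(t)$ with $p\in\mathsf{Prop}$, $t,s\in\mathsf{Term}$, $i\in\mathcal{A}$, $\theta\in\Theta_K$, $\eta\in\Theta_V^+$; other connectives are standard abbreviations. A model is $M=(W,D,\{P_i\}_{i\in\mathcal{A}},V,\mathsf{val})$ with $W\neq\emptyset$, $D\neq\emptyset$, $P_i(w)$ a countably additive probability measure on the powerset of $W$ for each $i,w$, $V:W\times\mathsf{Prop}\to\{0,1\}$, $\mathsf{val}:W\times\mathsf{Term}\to D$. Write $\llbracket\varphi\rrbracket^M=\{u\mid M,u\models\varphi\}$ and $\llbracket t=d\rrbracket^M=\{u\mid \mathsf{val}(u,t)=d\}$. Satisfaction: $M,w\models p$ iff $V(w,p)=1$; $M,w\models t=s$ iff $\mathsf{val}(w,t)=\mathsf{val}(w,s)$; Boolean clauses as usual; $M,w\models K_i^\theta\varphi$ iff $P_i(w)(\llbracket\varphi\rrbracket^M)\ge\theta$; $M,w\models Kv_i^\eta(t)$ iff there exists a unique $d\in D$ with $P_i(w)(\llbracket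 t=d\rrbracket^M)\ge\eta$. The system $\mathbf{PTKv}^{-}$ has rules Modus Ponens (from $\varphi$ and $\varphi\to\psi$ infer $\psi$) and $\mathrm{Nec}_K$ (from $\varphi$ infer $K_i^\theta\varphi$, for all $i\in\mathcal{A}$, $\theta\in\Theta_K$), and axiom schemata (for all agents $i$, terms $t,s,u$, formulas $\varphi,\psi$): all propositional tautologies; $t=t$; $t=s\to s=t$; $(t=s\wedge s=u)\to t=u$; $t=s\to((t=u)\leftrightarrow(s=u))$; $K_i^{\theta'}\varphi\to K_i^\theta\varphi$ for $\theta\le\theta'$ in $\Theta_K$; $K_i^\alpha(\varphi\to\psi)\to(K_i^\beta\varphi\to K_i^{\max\{0,\alpha+\beta-1\}}\psi)$ for $\alpha,\beta\in\Theta_K$; $K_i^\alpha\varphi\to\neg K_i^\beta\neg\varphi$ for $\alpha,\beta\in\Theta_K$ with $\alpha+\beta>1$; $K_i^0\varphi$; $K_i^1(t=s)\to(K_i^\theta(t=u)\leftrightarrow K_i^\theta(s=u))$ for $\theta\in\Theta_K$; $K_i^1(t=s)\to(Kv_i^\eta(t)\leftrightarrow Kv_i^\eta(s))$ for $\eta\in\Theta_V^+$. *)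

theory Defs
  imports "HOL-Probability.Probability"
begin

text \<open>Thresholds are rationals; well-formedness
  (thresholds in Theta_K resp. Theta_V^+) is imposed by wf_fm.\<close>

datatype ('p, 't, 'i) fm =
    Atom 'p
  | Eq 't 't
  | Neg "('p, 't, 'i) fm"
  | Imp "('p, 't, 'i) fm" "('p, 't, 'i) fm"
  | K 'i rat "('p, 't, 'i) fm"
  | Kv 'i rat 't

definition ThetaK :: "rat set" where
  "ThetaK = {x. 0 \<le> x \<and> x \<le> 1}"

definition ThetaV :: "rat set" where
  "ThetaV = {x. 1/2 < x \<and> x \<le> 1}"

fun wf_fm :: "('p, 't, 'i) fm \<Rightarrow> bool" where
  "wf_fm (Atom p) = True"
| "wf_fm (Eq t s) = True"
| "wf_fm (Neg \<phi>) = wf_fm \<phi>"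
| "wf_fm (Imp \<phi> \<psi>) = (wf_fm \<phi> \<and> wf_fm \<psi>)"
| "wf_fm (K i \<theta> \<phi>) = (\<theta> \<in> ThetaK \<and> wf_fm \<phi>)"
| "wf_fm (Kv i \<eta> t) = (\<eta> \<in> ThetaV)"

definition Conj :: "('p, 't, 'i) fm \<Rightarrow> ('p, 't, 'i) fm \<Rightarrow> ('p, 't, 'i) fm" where
  "Conj \<phi> \<psi> = Neg (Imp \<phi> (Neg \<psi>))"

definition Iff :: "('p, 't, 'i) fm \<Rightarrow> ('p, 't, 'i) fm \<Rightarrow> ('p, 't, 'i) fm" where
  "Iff \<phi> \<psi> = Conj (Imp \<phi> \<psi>) (Imp \<psi> \<phi>)"

text \<open>A formula is an instance of a propositional tautology if it is true under every
  Boolean assignment to its maximal non-Boolean subformulas.\<close>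

fun peval :: "(('p, 't, 'i) fm \<Rightarrow> bool) \<Rightarrow> ('p, 't, 'i) fm \<Rightarrow> bool" where
  "peval v (Neg \<phi>) = (\<not> peval v \<phi>)"
| "peval v (Imp \<phi> \<psi>) = (peval v \<phi> \<longrightarrow> peval v \<psi>)"
| "peval v \<phi> = v \<phi>"

definition tautology :: "('p, 't, 'i) fm \<Rightarrow> bool" where
  "tautology \<phi> = (\<forall>v. peval v \<phi>)"

definition is_model :: "('i \<Rightarrow> 'w \<Rightarrow> 'w measure) \<Rightarrow> bool" where
  "is_model P = (\<forall>i w. prob_space (P i w) \<and> space (P i w) = UNIV \<and> sets (P i w) = Pow UNIV)"

fun sat :: "('i \<Rightarrow> 'w \<Rightarrow> 'w measure) \<Rightarrow> ('w \<Rightarrow> 'p \<Rightarrow> bool) \<Rightarrow> ('w \<Rightarrow> 't \<Rightarrow> 'd)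
            \<Rightarrow> 'w \<Rightarrow> ('p, 't, 'i) fm \<Rightarrow> bool" where
  "sat P V val w (Atom p) = V w p"
| "sat P V val w (Eq t s) = (val w t = val w s)"
| "sat P V val w (Neg \<phi>) = (\<not> sat P V val w \<phi>)"
| "sat P V val w (Imp \<phi> \<psi>) = (sat P V val w \<phi> \<longrightarrow> sat P V val w \<psi>)"
| "sat P V val w (K i \<theta> \<phi>) =
     (measure (P i w) {u. sat P V val u \<phi>} \<ge> real_of_rat \<theta>)"
| "sat P V val w (Kv i \<eta> t) =
     (\<exists>!d. measure (P i w) {u. val u t = d} \<ge> real_of_rat \<eta>)"

inductive derivable :: "('p, 't, 'i) fm \<Rightarrow> bool" where
  Taut: "wf_fm \<phi> \<Longrightarrow> tautology \<phi> \<Longrightarrow> derivable \<phi>"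
| EqRefl: "derivable (Eq t t)"
| EqSym: "derivable (Imp (Eq t s) (Eq s t))"
| EqTrans: "derivable (Imp (Conj (Eq t s) (Eq s u)) (Eq t u))"
| EqSubst: "derivable (Imp (Eq t s) (Iff (Eq t u) (Eq s u)))"
| Mono: "wf_fm \<phi> \<Longrightarrow> \<theta> \<in> ThetaK \<Longrightarrow> \<theta>' \<in> ThetaK \<Longrightarrow> \<theta> \<le> \<theta>' \<Longrightarrow>
           derivable (Imp (K i \<theta>' \<phi>) (K i \<theta> \<phi>))"
| KDist: "wf_fm \<phi> \<Longrightarrow> wf_fm \<psi> \<Longrightarrow> \<alpha> \<in> ThetaK \<Longrightarrow> \<beta> \<in> ThetaK \<Longrightarrow>
           derivable (Imp (K i \<alpha> (Imp \<phi> \<psi>)) (Imp (K i \<beta> \<phi>) (K i (max 0 (\<alpha> + \<beta> - 1)) \<psi>)))"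
| KCons: "wf_fm \<phi> \<Longrightarrow> \<alpha> \<in> ThetaK \<Longrightarrow> \<beta> \<in> ThetaK \<Longrightarrow> \<alpha> + \<beta> > 1 \<Longrightarrow>
           derivable (Imp (K i \<alpha> \<phi>) (Neg (K i \<beta> (Neg \<phi>))))"
| KZero: "wf_fm \<phi> \<Longrightarrow> derivable (K i 0 \<phi>)"
| KSubst: "\<theta> \<in> ThetaK \<Longrightarrow>
           derivable (Imp (K i 1 (Eq t s)) (Iff (K i \<theta> (Eq t u)) (K i \<theta> (Eq s u))))"
| KvSubst: "\<eta> \<in> ThetaV \<Longrightarrow>
           derivable (Imp (K i 1 (Eq t s)) (Iff (Kv i \<eta> t) (Kv i \<eta> s)))"
| MP: "derivable \<phi> \<Longrightarrow> derivable (Imp \<phi> \<psi>) \<Longrightarrow> derivable \<psi>"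
| Nec: "derivable \<phi> \<Longrightarrow> \<theta> \<in> ThetaK \<Longrightarrow> derivable (K i \<theta> \<phi>)"

end

theory Submission
  imports Defs
begin

lemma pm_facts:
  assumes "is_model P"
  shows "prob_space (P i w)" "sets (P i w) = Pow UNIV" "space (P i w) = UNIV"
  using assms unfolding is_model_def by auto

lemma pm_sub:
  assumes "prob_space M" "sets M = Pow UNIV" "space M = UNIV"
  shows "measure M B \<le> measure M C + measure M (B - C)"
proof -
  interpret prob_space M by fact
  have "B \<subseteq> C \<union> (B - C)" by auto
  hence "measure M B \<le> measure M (C \<union> (B - C))"
    by (intro finite_measure_mono) (auto simp: assms)
  also have "\<dots> = measure M C + measure M (B - C)"
    by (intro finite_measure_Union) (auto simp: assms)
  finally show ?thesis .
qed

lemma pm_compl: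
  assumes "prob_space M" "sets M = Pow UNIV" "space M = UNIV"
  shows "measure M (- A) = 1 - measure M A"
proof -
  interpret prob_space M by fact
  have "measure M (space M - A) = 1 - measure M A"
    by (subst prob_compl) (auto simp: assms)
  thus ?thesis using assms by (simp add: Compl_eq_Diff_UNIV)
qed

lemma pm_le1:
  assumes "prob_space M"
  shows "measure M A \<le> 1"
proof -
  interpret prob_space M by fact
  show ?thesis by simp
qed

lemma pm_ge0: "measure M A \<ge> 0" by simp

lemma pm_mono:
  assumes "prob_space M" "sets M = Pow UNIV" "space M = UNIV" "A \<subseteq> B"
  shows "measure M A \<le> measure M B"
proof -
  interpret prob_space M by fact
  show ?thesis by (intro finite_measure_mono) (auto simp: assms)
qed

lemma pm_null:
  assumes "prob_space M" "sets M = Pow UNIV" "space M = UNIV"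
    and "measure M E \<ge> 1" and "\<And>u. u \<in> E \<Longrightarrow> (u \<in> A \<longleftrightarrow> u \<in> B)"
  shows "measure M A = measure M B"
proof -
  have c: "measure M (- E) = 0" using pm_compl[OF assms(1-3), of E] pm_le1[OF assms(1), of E] assms(4)
    by simp
  have d1: "A - B \<subseteq> - E" "B - A \<subseteq> - E" using assms(5) by auto
  have "measure M (A - B) \<le> 0" "measure M (B - A) \<le> 0"
    using pm_mono[OF assms(1-3) d1(1)] pm_mono[OF assms(1-3) d1(2)] c by auto
  thus ?thesis using pm_sub[OF assms(1-3), of A B] pm_sub[OF assms(1-3), of B A] by simp
qed

lemma peval_sat: "peval (sat P V val w) \<phi> = sat P V val w \<phi>"
  by (induction "sat P V val w" \<phi> rule: peval.induct) auto

lemma sound: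
  assumes "derivable \<phi>" "is_model P"
  shows "\<forall>w. sat P V val w \<phi>"
  using assms(1)
proof (induction \<phi> rule: derivable.induct)
  case (Taut \<phi>)
  then show ?case using peval_sat unfolding tautology_def by metis
next
  case (EqTrans t s u)
  then show ?case by (auto simp: Conj_def)
next
  case (EqSubst t s u)
  then show ?case by (auto simp: Conj_def Iff_def)
next
  case (Mono \<phi> \<theta> \<theta>' i)
  then show ?case by (auto simp: of_rat_less_eq intro: order_trans[rotated])
next
  case (KDist \<phi> \<psi> \<alpha> \<beta> i)
  show ?case
  proof (intro allI, simp only: sat.simps, intro impI)
    fix w
    let ?M = "P i w"
    let ?A = "{u. sat P V val u \<phi>}" and ?B = "{u. sat P V val u \<psi>}"
      and ?C = "{u. sat P V val u \<phi> \<longrightarrow> sat P V val u \<psi>}"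
    note f = pm_facts[OF assms(2), of i w]
    assume h1: "real_of_rat \<alpha> \<le> measure ?M ?C" and h2: "real_of_rat \<beta> \<le> measure ?M ?A"
    have "?A - ?B \<subseteq> - ?C" by auto
    hence "measure ?M (?A - ?B) \<le> measure ?M (- ?C)" using pm_mono[OF f] by blast
    also have "\<dots> = 1 - measure ?M ?C" using pm_compl[OF f] by blast
    finally have "measure ?M ?A \<le> measure ?M ?B + (1 - measure ?M ?C)"
      using pm_sub[OF f, of ?A ?B] by linarith
    hence "real_of_rat (\<alpha> + \<beta> - 1) \<le> measure ?M ?B" using h1 h2
      by (simp add: of_rat_add of_rat_diff)
    moreover have "real_of_rat 0 \<le> measure ?M ?B" by simp
    ultimately show "real_of_rat (max 0 (\<alpha> + \<beta> - 1)) \<le> measure ?M ?B"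
      by (simp add: max_def)
  qed
next
  case (KCons \<phi> \<alpha> \<beta> i)
  show ?case
  proof (intro allI, simp only: sat.simps, intro impI notI)
    fix w
    let ?M = "P i w"
    note f = pm_facts[OF assms(2), of i w]
    assume h1: "real_of_rat \<alpha> \<le> measure ?M {u. sat P V val u \<phi>}"
      and h2: "real_of_rat \<beta> \<le> measure ?M {u. \<not> sat P V val u \<phi>}"
    have "{u. \<not> sat P V val u \<phi>} = - {u. sat P V val u \<phi>}" by auto
    hence "measure ?M {u. \<not> sat P V val u \<phi>} = 1 - measure ?M {u. sat P V val u \<phi>}"
      using pm_compl[OF f] by simp
    moreover have "real_of_rat \<alpha> + real_of_rat \<beta> > 1" using KCons(4)
      by (metis of_rat_add of_rat_1 of_rat_less)
    ultimately show False using h1 h2 by linarith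
  qed
next
  case (KZero \<phi> i)
  then show ?case by simp
next
  case (KSubst \<theta> i t s u)
  show ?case
  proof (intro allI)
    fix w
    note f = pm_facts[OF assms(2), of i w]
    have "measure (P i w) {x. val x t = val x s} \<ge> 1 \<Longrightarrow>
        measure (P i w) {x. val x t = val x u} = measure (P i w) {x. val x s = val x u}"
      by (rule pm_null[OF f]) auto
    then show "sat P V val w (Imp (K i 1 (Eq t s)) (Iff (K i \<theta> (Eq t u)) (K i \<theta> (Eq s u))))"
      by (auto simp: Iff_def Conj_def)
  qed
next
  case (KvSubst \<eta> i t s)
  show ?case
  proof (intro allI)
    fix w
    note f = pm_facts[OF assms(2), of i w]
    have "measure (P i w) {x. val x t = val x s} \<ge> 1 \<Longrightarrow>
        measure (P i w) {x. val x t = d} = measure (P i w) {x. val x s = d}" for d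
      by (rule pm_null[OF f]) auto
    then show "sat P V val w (Imp (K i 1 (Eq t s)) (Iff (Kv i \<eta> t) (Kv i \<eta> s)))"
      by (auto simp: Iff_def Conj_def)
  qed
next
  case (MP \<phi> \<psi>)
  then show ?case by simp
next
  case (Nec \<phi> \<theta> i)
  show ?case
  proof (intro allI)
    fix w
    note f = pm_facts[OF assms(2), of i w]
    have "{u. sat P V val u \<phi>} = space (P i w)" using Nec.IH f by auto
    hence "measure (P i w) {u. sat P V val u \<phi>} = 1"
      using prob_space.prob_space[OF f(1)] by simp
    moreover have "real_of_rat \<theta> \<le> 1" using Nec.hyps(2) unfolding ThetaK_def
      by (metis mem_Collect_eq of_rat_1 of_rat_less_eq)
    ultimately show "sat P V val w (K i \<theta> \<phi>)" by simp
  qed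
qed auto

theorem theorem1:
  fixes \<phi> :: "('p::countable, 't::countable, 'i::finite) fm"
    and P :: "'i \<Rightarrow> 'w \<Rightarrow> 'w measure"
    and V :: "'w \<Rightarrow> 'p \<Rightarrow> bool"
    and val :: "'w \<Rightarrow> 't \<Rightarrow> 'd"
    and w :: 'w
  assumes "wf_fm \<phi>"
    and "derivable \<phi>"
    and "is_model P"
  shows "sat P V val w \<phi>"
  using sound[OF assms(2,3)] by blast

end
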